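(* Let $M=\max_{x\in V}d_x^{-1/2}$. For all $\lambda,\mu>0$ and $x,y\in V$, $$|\mathrm{KD}_\lambda(x,y)-\mathrm{KD}_\mu(x,y)|\le 2M\,\mathrm{vol}(V)^{1/2}|\lambda-\mu|.$$
   Context: Let $H=(V,E,w)$ be a weighted hypergraph: $V$ is a finite set, $E$ a set of nonempty subsets of $V$, $w\colon E\to\mathbb{R}_{>0}$. Write $x\sim y$ if some $e\in E$ contains both; $H$ is assumed connected. The degree is $d_x=\sum_{e\ni x}w_e>0$, $D=\mathrm{diag}(d_x)$, $\mathrm{vol}(V)=\sum_x d_x$. The distance $d(x,y)$ is the minimal $n$ with a chain $x=z_0\sim\cdots\sim z_n=y$. $\delta_x$ is the indicator of $x$. $\mathbb{R}^V$ carries the inner product $\langle f,g\rangle=\sum_x f(x)g(x)/d_x$ with norm $\|\cdot\|$. For $e\in E$ let $B_e=\mathrm{Conv}\{\delta_x-\delta_y : x,y\in e\}$. The multivalued hypergraph Laplacian is $L(f)=\{\sum_{e}w_e\mathtt{b}_e(\mathtt{b}_e^\top f) : \mathtt{b}_e\in\operatorname{argmax}_{\mathtt b\in B_e}\mathtt b^\top f\}$ and the normalized Laplacian is $\mathcal{L}f=L(D^{-1}f)$, a maximal monotone operator on $(\mathbb{R}^V,\langle\cdot,\cdot\rangle)$. For $\lambda>0$ the resolvent $J_\lambda=(I+\lambda\mathcal L)^{-1}$ is a single-valued map $\mathbb{R}^V\to\mathbb{R}^V$ (equivalently $J_\lambda f=\operatorname{argmin}_g\{\frac{1}{2\lambda}\|f-g\|^2+Q(D^{-1}g)\}$,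 $Q(g)=\frac12\sum_e w_e\max_{x,y\in e}(g(x)-g(y))^2$). A function $f$ is weighted $1$-Lipschitz if $|f(x)/d_x-f(y)/d_y|\le d(x,y)$ for all $x,y$; $\mathrm{Lip}^1_w(V)$ denotes the set of such functions. $\mathrm{KD}_\lambda(x,y)=\sup\{\langle J_\lambda f,\delta_x-\delta_y\rangle : f\in\mathrm{Lip}^1_w(V)\}$. *)

theory Defs
  imports "HOL-Analysis.Analysis"
begin

text \<open>Vertices form a finite type 'a (so V = UNIV); functions on V are vectors in real^'a.
  A weighted hypergraph is given by a set of hyperedges E and weights w.\<close>

definition hdeg :: "'a set set \<Rightarrow> ('a set \<Rightarrow> real) \<Rightarrow> 'a \<Rightarrow> real" where
  "hdeg E w x = (\<Sum>e\<in>{e\<in>E. x \<in> e}. w e)"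

definition hvol :: "'a::finite set set \<Rightarrow> ('a set \<Rightarrow> real) \<Rightarrow> real" where
  "hvol E w = (\<Sum>x\<in>UNIV. hdeg E w x)"

definition hadj :: "'a set set \<Rightarrow> 'a \<Rightarrow> 'a \<Rightarrow> bool" where
  "hadj E x y \<longleftrightarrow> (\<exists>e\<in>E. x \<in> e \<and> y \<in> e)"

definition hchain :: "'a set set \<Rightarrow> 'a \<Rightarrow> 'a \<Rightarrow> nat \<Rightarrow> bool" where
  "hchain E x y n \<longleftrightarrow> (\<exists>z::nat \<Rightarrow> 'a. z 0 = x \<and> z n = y \<and> (\<forall>i<n. hadj E (z i) (z (Suc i))))"

definition hconnected :: "'a set set \<Rightarrow> bool" where
  "hconnected E \<longleftrightarrow> (\<forall>x y. \<exists>n. hchain E x y n)"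

definition hdist :: "'a set set \<Rightarrow> 'a \<Rightarrow> 'a \<Rightarrow> nat" where
  "hdist E x y = (LEAST n. hchain E x y n)"

definition winner :: "'a::finite set set \<Rightarrow> ('a set \<Rightarrow> real) \<Rightarrow> real^'a \<Rightarrow> real^'a \<Rightarrow> real" where
  "winner E w f g = (\<Sum>x\<in>UNIV. f $ x * g $ x / hdeg E w x)"

definition delta :: "'a::finite \<Rightarrow> real^'a" where
  "delta x = axis x 1"

definition Bset :: "'a::finite set \<Rightarrow> (real^'a) set" where
  "Bset e = convex hull {delta x - delta y | x y. x \<in> e \<and> y \<in> e}"

definition argmaxB :: "'a::finite set \<Rightarrow> real^'a \<Rightarrow> (real^'a) set" where
  "argmaxB e f = {b \<in> Bset e. \<forall>b'\<in>Bset e. b' \<bullet> f \<le> b \<bullet> f}"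

definition hLap :: "'a::finite set set \<Rightarrow> ('a set \<Rightarrow> real) \<Rightarrow> real^'a \<Rightarrow> (real^'a) set" where
  "hLap E w f = {(\<Sum>e\<in>E. (w e * (b e \<bullet> f)) *\<^sub>R b e) | b. \<forall>e\<in>E. b e \<in> argmaxB e f}"

definition Dinv :: "'a::finite set set \<Rightarrow> ('a set \<Rightarrow> real) \<Rightarrow> real^'a \<Rightarrow> real^'a" where
  "Dinv E w f = (\<chi> x. f $ x / hdeg E w x)"

definition hLnorm :: "'a::finite set set \<Rightarrow> ('a set \<Rightarrow> real) \<Rightarrow> real^'a \<Rightarrow> (real^'a) set" where
  "hLnorm E w f = hLap E w (Dinv E w f)"

text \<open>Resolvent J_lambda = (I + lambda Lnorm)^{-1}: the unique g with f \<in> g + lambda Lnorm(g).\<close>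
definition resolvent :: "'a::finite set set \<Rightarrow> ('a set \<Rightarrow> real) \<Rightarrow> real \<Rightarrow> real^'a \<Rightarrow> real^'a" where
  "resolvent E w lam f = (THE g. \<exists>u\<in>hLnorm E w g. f = g + lam *\<^sub>R u)"

definition Lip1w :: "'a::finite set set \<Rightarrow> ('a set \<Rightarrow> real) \<Rightarrow> (real^'a) set" where
  "Lip1w E w = {f. \<forall>x y. \<bar>f $ x / hdeg E w x - f $ y / hdeg E w y\<bar> \<le> real (hdist E x y)}"

definition KD :: "'a::finite set set \<Rightarrow> ('a set \<Rightarrow> real) \<Rightarrow> real \<Rightarrow> 'a \<Rightarrow> 'a \<Rightarrow> real" where
  "KD E w lam x y = Sup {winner E w (resolvent E w lam f) (delta x - delta y) | f. f \<in> Lip1w E w}"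

end

theory Submission
  imports Defs
begin


lemma finite_E: "finite (E :: 'a::finite set set)"
  by (rule finite_subset[of _ UNIV]) auto

lemma delta_nth: "delta a $ z = (if z = a then 1 else 0)"
  by (simp add: delta_def axis_def)

lemma inner_delta: "delta a \<bullet> p = p $ a"
  by (simp add: delta_def inner_axis')

lemma Bset_sub: "convex C \<Longrightarrow> (\<And>a b. a \<in> e \<Longrightarrow> b \<in> e \<Longrightarrow> delta a - delta b \<in> C) \<Longrightarrow> Bset e \<subseteq> C"
  unfolding Bset_def by (rule hull_minimal) auto

lemma gen_Bset: "a \<in> e \<Longrightarrow> b \<in> e \<Longrightarrow> delta a - delta b \<in> Bset e"
  unfolding Bset_def by (rule hull_inc) auto

definition mx :: "'a::finite set \<Rightarrow> real^'a \<Rightarrow> real" where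
  "mx e p = Max ((\<lambda>(a,b). p$a - p$b) ` (e \<times> e))"

lemma mx_ge: "a \<in> e \<Longrightarrow> b \<in> e \<Longrightarrow> p$a - p$b \<le> mx e p"
  unfolding mx_def by (rule Max_ge) force+

lemma mx_attain: "e \<noteq> {} \<Longrightarrow> \<exists>a\<in>e. \<exists>b\<in>e. p$a - p$b = mx e p"
proof -
  assume "e \<noteq> {}"
  then have "mx e p \<in> (\<lambda>(a,b). p$a - p$b) ` (e \<times> e)"
    unfolding mx_def by (intro Max_in) auto
  then show ?thesis by force
qed

lemma mx_nonneg: "e \<noteq> {} \<Longrightarrow> 0 \<le> mx e p"
  using mx_ge[of _ e _ p] by force

lemma Bset_le_mx: "b \<in> Bset e \<Longrightarrow> b \<bullet> p \<le> mx e p"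
proof -
  assume b: "b \<in> Bset e"
  have "Bset e \<subseteq> {b. p \<bullet> b \<le> mx e p}"
    by (rule Bset_sub[OF convex_halfspace_le])
       (auto simp: inner_commute[of p] inner_diff_left inner_delta mx_ge)
  with b show ?thesis by (auto simp: inner_commute)
qed

lemma argmaxB_eq: "e \<noteq> {} \<Longrightarrow> argmaxB e p = Bset e \<inter> {b. p \<bullet> b \<ge> mx e p}"
proof -
  assume ne: "e \<noteq> {}"
  then obtain a b where ab: "a \<in> e" "b \<in> e" "p$a - p$b = mx e p" using mx_attain by blast
  have g: "delta a - delta b \<in> Bset e" using gen_Bset ab by auto
  have gv: "(delta a - delta b) \<bullet> p = mx e p" using ab by (simp add: inner_diff_left inner_delta)
  show ?thesis
  proof (intro set_eqI iffI)
    fix c assume "c \<in> argmaxB e p"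
    then have "c \<in> Bset e" "(delta a - delta b) \<bullet> p \<le> c \<bullet> p" using g unfolding argmaxB_def by auto
    then show "c \<in> Bset e \<inter> {b. p \<bullet> b \<ge> mx e p}" using gv by (simp add: inner_commute)
  next
    fix c assume "c \<in> Bset e \<inter> {b. p \<bullet> b \<ge> mx e p}"
    then have "c \<in> Bset e" "mx e p \<le> c \<bullet> p" by (auto simp: inner_commute)
    then show "c \<in> argmaxB e p" unfolding argmaxB_def using Bset_le_mx[of _ e p] by force
  qed
qed

lemma argmaxB_val: "e \<noteq> {} \<Longrightarrow> b \<in> argmaxB e p \<Longrightarrow> b \<bullet> p = mx e p"
proof -
  assume ne: "e \<noteq> {}" and b: "b \<in> argmaxB e p"
  have "b \<in> Bset e \<and> mx e p \<le> p \<bullet> b" using argmaxB_eq[OF ne, of p] b by blast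
  then show ?thesis using Bset_le_mx[of b e p] by (metis inner_commute order_antisym)
qed

lemma gen_argmax: "a \<in> e \<Longrightarrow> b \<in> e \<Longrightarrow> p$a - p$b = mx e p \<Longrightarrow> delta a - delta b \<in> argmaxB e p"
proof -
  assume a: "a \<in> e" and b: "b \<in> e" and m: "p$a - p$b = mx e p"
  have v: "(delta a - delta b) \<bullet> p = mx e p" using m by (simp add: inner_diff_left inner_delta)
  show ?thesis unfolding argmaxB_def using gen_Bset[OF a b] Bset_le_mx[of _ e p] v by auto
qed

lemma compact_Bset: "compact (Bset e)"
  unfolding Bset_def
proof (rule compact_convex_hull, rule finite_imp_compact)
  have "{delta x - delta y |x y. x \<in> e \<and> y \<in> e} = (\<lambda>(x,y). delta x - delta y) ` (e \<times> e)" by auto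
  then show "finite {delta x - delta y |x y. x \<in> e \<and> y \<in> e}" by simp
qed

lemma argmaxB_cc: "e \<noteq> {} \<Longrightarrow> compact (argmaxB e p) \<and> convex (argmaxB e p)"
proof -
  assume ne: "e \<noteq> {}"
  have "compact (Bset e \<inter> {b. p \<bullet> b \<ge> mx e p})"
    by (rule compact_Int_closed[OF compact_Bset closed_halfspace_ge])
  moreover have "convex (Bset e \<inter> {b. p \<bullet> b \<ge> mx e p})"
    unfolding Bset_def by (rule convex_Int[OF convex_convex_hull convex_halfspace_ge])
  ultimately show ?thesis using argmaxB_eq[OF ne] by simp
qed

lemma continuous_Max:
  fixes g :: "'i \<Rightarrow> 'b::topological_space \<Rightarrow> real"
  assumes "finite I" "I \<noteq> {}" "\<And>i. i \<in> I \<Longrightarrow> continuous_on S (g i)"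
  shows "continuous_on S (\<lambda>x. MAX i\<in>I. g i x)"
  using assms
proof (induction I rule: finite_ne_induct)
  case (singleton i) then show ?case by simp
next
  case (insert i F)
  have "(\<lambda>x. MAX j\<in>insert i F. g j x) = (\<lambda>x. max (g i x) (MAX j\<in>F. g j x))"
    using insert by (auto simp: Max_insert)
  then show ?case using insert by (auto intro!: continuous_on_max)
qed

lemma mx_cont: "e \<noteq> {} \<Longrightarrow> continuous_on S (mx e)"
proof -
  assume "e \<noteq> {}"
  have "mx e = (\<lambda>p. MAX ab\<in>e\<times>e. (\<lambda>ab. p $ fst ab - p $ snd ab) ab)"
    unfolding mx_def by (auto simp: case_prod_beta' image_def)
  then show ?thesis using \<open>e \<noteq> {}\<close>
    by (auto intro!: continuous_Max continuous_intros)
qed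



lemma sumset_cc:
  fixes A :: "'e \<Rightarrow> ('b::euclidean_space) set" and c :: "'e \<Rightarrow> real"
  assumes "finite F" "\<forall>e\<in>F. compact (A e) \<and> convex (A e)"
  shows "compact {\<Sum>e\<in>F. c e *\<^sub>R b e | b. \<forall>e\<in>F. b e \<in> A e} \<and>
         convex {\<Sum>e\<in>F. c e *\<^sub>R b e | b. \<forall>e\<in>F. b e \<in> A e}"
  using assms
proof (induction F rule: finite_induct)
  case empty
  have "{\<Sum>e\<in>{}. c e *\<^sub>R b e | b. \<forall>e\<in>{}. b e \<in> A e} = {0}" by auto
  then show ?case by simp
next
  case (insert e F)
  let ?S = "{\<Sum>e\<in>F. c e *\<^sub>R b e | b. \<forall>e\<in>F. b e \<in> A e}"
  let ?U = "(\<lambda>u. c e *\<^sub>R u) ` A e"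
  have IH: "compact ?S \<and> convex ?S" using insert by auto
  have eq: "{\<Sum>e\<in>insert e F. c e *\<^sub>R b e | b. \<forall>e\<in>insert e F. b e \<in> A e} = {x + y | x y. x \<in> ?U \<and> y \<in> ?S}"
  proof (intro set_eqI iffI)
    fix z assume "z \<in> {\<Sum>e\<in>insert e F. c e *\<^sub>R b e | b. \<forall>e\<in>insert e F. b e \<in> A e}"
    then obtain b where b: "\<forall>e'\<in>insert e F. b e' \<in> A e'" "z = (\<Sum>e\<in>insert e F. c e *\<^sub>R b e)" by blast
    then have "z = c e *\<^sub>R b e + (\<Sum>e\<in>F. c e *\<^sub>R b e)" using insert by simp
    then show "z \<in> {x + y | x y. x \<in> ?U \<and> y \<in> ?S}" using b by blast
  next
    fix z assume "z \<in> {x + y | x y. x \<in> ?U \<and> y \<in> ?S}"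
    then obtain u b where ub: "u \<in> A e" "\<forall>e'\<in>F. b e' \<in> A e'" "z = c e *\<^sub>R u + (\<Sum>e\<in>F. c e *\<^sub>R b e)" by blast
    define b' where "b' = b(e := u)"
    have "(\<Sum>e\<in>F. c e *\<^sub>R b' e) = (\<Sum>e\<in>F. c e *\<^sub>R b e)"
      using insert by (intro sum.cong) (auto simp: b'_def)
    then have "z = (\<Sum>e\<in>insert e F. c e *\<^sub>R b' e)" using ub insert by (simp add: b'_def)
    moreover have "\<forall>e'\<in>insert e F. b' e' \<in> A e'" using ub by (auto simp: b'_def)
    ultimately show "z \<in> {\<Sum>e\<in>insert e F. c e *\<^sub>R b e | b. \<forall>e\<in>insert e F. b e \<in> A e}" by blast
  qed
  have cU: "compact ?U" "convex ?U" using insert by (auto intro: compact_scaling convex_scaling)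
  have "{x + y | x y. x \<in> ?U \<and> y \<in> ?S} = (\<Union>x\<in>?U. \<Union>y\<in>?S. {x + y})" by blast
  then have cv: "convex {x + y | x y. x \<in> ?U \<and> y \<in> ?S}" using convex_sums[OF cU(2)] IH by simp
  have cp: "compact {x + y | x y. x \<in> ?U \<and> y \<in> ?S}" using compact_sums[OF cU(1)] IH by blast
  show ?case unfolding eq using cv cp by blast
qed

lemma hLap_mono:
  assumes ne: "\<forall>e\<in>E. e \<noteq> {}" and wp: "\<forall>e\<in>E. w e > 0"
    and u: "u \<in> hLap E w p" and v: "v \<in> hLap E w q"
  shows "0 \<le> (u - v) \<bullet> (p - q)"
proof -
  obtain b where b: "\<forall>e\<in>E. b e \<in> argmaxB e p" "u = (\<Sum>e\<in>E. (w e * (b e \<bullet> p)) *\<^sub>R b e)"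
    using u unfolding hLap_def by blast
  obtain c where c: "\<forall>e\<in>E. c e \<in> argmaxB e q" "v = (\<Sum>e\<in>E. (w e * (c e \<bullet> q)) *\<^sub>R c e)"
    using v unfolding hLap_def by blast
  have "(u - v) \<bullet> (p - q) = (\<Sum>e\<in>E. w e * ((b e \<bullet> p) * (b e \<bullet> p - b e \<bullet> q) - (c e \<bullet> q) * (c e \<bullet> p - c e \<bullet> q)))"
    unfolding b(2) c(2) by (simp add: sum_subtractf[symmetric] inner_sum_left inner_diff_left inner_diff_right algebra_simps)
  also have "\<dots> \<ge> 0"
  proof (rule sum_nonneg)
    fix e assume e: "e \<in> E"
    have bA: "b e \<in> Bset e" "\<forall>b'\<in>Bset e. b' \<bullet> p \<le> b e \<bullet> p" using b(1) e unfolding argmaxB_def by auto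
    have cA: "c e \<in> Bset e" "\<forall>b'\<in>Bset e. b' \<bullet> q \<le> c e \<bullet> q" using c(1) e unfolding argmaxB_def by auto
    have 1: "c e \<bullet> p \<le> b e \<bullet> p" using bA cA by auto
    have 2: "b e \<bullet> q \<le> c e \<bullet> q" using bA cA by auto
    have 3: "0 \<le> b e \<bullet> p" using argmaxB_val[of e "b e" p] mx_nonneg[of e p] ne e b(1) by auto
    have 4: "0 \<le> c e \<bullet> q" using argmaxB_val[of e "c e" q] mx_nonneg[of e q] ne e c(1) by auto
    have 5: "(b e \<bullet> p) * (b e \<bullet> q) \<le> (b e \<bullet> p) * (c e \<bullet> q)" using 2 3 by (rule mult_left_mono)
    have 6: "(c e \<bullet> q) * (c e \<bullet> p) \<le> (c e \<bullet> q) * (b e \<bullet> p)" using 1 4 by (rule mult_left_mono)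
    have "0 \<le> (b e \<bullet> p - c e \<bullet> q)^2" by simp
    then have T: "0 \<le> (b e \<bullet> p) * (b e \<bullet> p - b e \<bullet> q) - (c e \<bullet> q) * (c e \<bullet> p - c e \<bullet> q)"
      using 5 6 by (simp add: power2_eq_square algebra_simps)
    have W: "0 \<le> w e" using wp e by (simp add: less_imp_le)
    from mult_nonneg_nonneg[OF W T] show "0 \<le> w e * ((b e \<bullet> p) * (b e \<bullet> p - b e \<bullet> q) - (c e \<bullet> q) * (c e \<bullet> p - c e \<bullet> q))"
      .
  qed
  finally show ?thesis .
qed

definition Tw :: "'a::finite set set \<Rightarrow> ('a set \<Rightarrow> real) \<Rightarrow> real^'a \<Rightarrow> real^'a" where
  "Tw E w f = (\<chi> x. f$x / sqrt (hdeg E w x))"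

lemma winner_T:
  assumes "\<forall>v. hdeg E w v > 0"
  shows "winner E w f g = Tw E w f \<bullet> Tw E w g"
  unfolding winner_def Tw_def inner_vec_def
proof (intro sum.cong refl)
  fix x
  have d: "hdeg E w x > 0" using assms by auto
  have s: "sqrt (hdeg E w x) * sqrt (hdeg E w x) = hdeg E w x" using d by simp
  show "f $ x * g $ x / hdeg E w x = (\<chi> x. f $ x / sqrt (hdeg E w x)) $ x \<bullet> (\<chi> x. g $ x / sqrt (hdeg E w x)) $ x"
  proof -
    have "(f $ x / sqrt (hdeg E w x)) * (g $ x / sqrt (hdeg E w x)) = f $ x * g $ x / (sqrt (hdeg E w x) * sqrt (hdeg E w x))"
      by simp
    then show ?thesis using s by simp
  qed
qed

lemma Tw_diff: "Tw E w (f - g) = Tw E w f - Tw E w g"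
  by (simp add: Tw_def vec_eq_iff diff_divide_distrib)
lemma Tw_add: "Tw E w (f + g) = Tw E w f + Tw E w g"
  by (simp add: Tw_def vec_eq_iff add_divide_distrib)
lemma Tw_scale: "Tw E w (c *\<^sub>R f) = c *\<^sub>R Tw E w f"
  by (simp add: Tw_def vec_eq_iff)

lemma norm_Tw_delta:
  assumes "\<forall>v. hdeg E w v > 0"
  shows "norm (Tw E w (delta x)) = 1 / sqrt (hdeg E w x)"
proof -
  have "Tw E w (delta x) = (1 / sqrt (hdeg E w x)) *\<^sub>R axis x 1"
    by (simp add: Tw_def vec_eq_iff delta_nth axis_def)
  moreover have "0 \<le> sqrt (hdeg E w x)" using assms by (simp add: less_imp_le)
  ultimately show ?thesis by simp
qed

lemma winner_Dinv: "winner E w a (g1 - g2) = a \<bullet> (Dinv E w g1 - Dinv E w g2)"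
  unfolding winner_def Dinv_def inner_vec_def
  by (intro sum.cong refl) (simp add: diff_divide_distrib algebra_simps)

lemma hLnorm_mono:
  assumes ne: "\<forall>e\<in>E. e \<noteq> {}" and wp: "\<forall>e\<in>E. w e > 0"
    and u: "u1 \<in> hLnorm E w g1" and v: "u2 \<in> hLnorm E w g2"
  shows "0 \<le> winner E w (u1 - u2) (g1 - g2)"
  unfolding winner_Dinv using hLap_mono[OF ne wp] u v unfolding hLnorm_def by blast

lemma winner_delta: "winner E w f (delta x) = f$x / hdeg E w x"
proof -
  have "(\<Sum>z\<in>UNIV. f $ z * delta x $ z / hdeg E w z) = (\<Sum>z\<in>UNIV. if z = x then f $ z / hdeg E w z else 0)"
    by (intro sum.cong refl) (simp add: delta_nth)
  then show ?thesis unfolding winner_def by simp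
qed

lemma winner_diff2: "winner E w f (a - b) = winner E w f a - winner E w f b"
  unfolding winner_def by (simp add: sum_subtractf[symmetric] diff_divide_distrib algebra_simps)



definition Psi :: "'a::finite set set \<Rightarrow> ('a set \<Rightarrow> real) \<Rightarrow> real \<Rightarrow> real^'a \<Rightarrow> real^'a \<Rightarrow> real" where
  "Psi E w lam f p = (\<Sum>x\<in>UNIV. (f$x - hdeg E w x * p$x)^2 / hdeg E w x) / (2*lam)
     + (\<Sum>e\<in>E. w e * (mx e p)^2) / 2"

lemma Psi_cont:
  assumes ne: "\<forall>e\<in>E. e \<noteq> {}" and dp: "\<forall>v. hdeg E w v > 0" and lp: "lam > 0"
  shows "continuous_on UNIV (Psi E w lam f)"
proof -
  have "\<And>e. e \<in> E \<Longrightarrow> continuous_on UNIV (\<lambda>p. w e * (mx e p)^2)"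
  proof -
    fix e assume "e \<in> E"
    then have "continuous_on UNIV (mx e)" using ne mx_cont by blast
    then show "continuous_on UNIV (\<lambda>p. w e * (mx e p)^2)" by (intro continuous_intros)
  qed
  then have c2: "continuous_on UNIV (\<lambda>p. (\<Sum>e\<in>E. w e * (mx e p)^2) / 2)"
    by (intro continuous_on_divide continuous_on_sum continuous_on_const) auto
  have c1: "continuous_on UNIV (\<lambda>p. (\<Sum>x\<in>UNIV. (f$x - hdeg E w x * p$x)^2 / hdeg E w x) / (2*lam))"
    using dp lp by (intro continuous_intros) (auto simp: less_imp_neq[symmetric])
  show ?thesis unfolding Psi_def by (rule continuous_on_add[OF c1 c2])
qed

lemma Psi_second_nonneg:
  assumes wp: "\<forall>e\<in>E. w e > 0"
  shows "0 \<le> (\<Sum>e\<in>E. w e * (mx e p)^2) / 2"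
  using wp by (auto intro!: sum_nonneg divide_nonneg_nonneg simp: less_imp_le)

lemma norm_sq_sum: "(norm (p::real^'a::finite))^2 = (\<Sum>x\<in>UNIV. (p$x)^2)"
  unfolding power2_norm_eq_inner inner_vec_def by (simp add: power2_eq_square)

lemma Psi_min_exists:
  assumes ne: "\<forall>e\<in>E. e \<noteq> {}" and wp: "\<forall>e\<in>E. w e > 0"
    and dp: "\<forall>v. hdeg E w v > 0" and lp: "lam > 0"
  shows "\<exists>p. \<forall>q. Psi E w lam f p \<le> Psi E w lam f q"
proof -
  let ?P = "Psi E w lam f"
  let ?d = "hdeg E w"
  define K where "K = {q. ?P q \<le> ?P 0}"
  have cont: "continuous_on UNIV ?P" by (rule Psi_cont[OF ne dp lp])
  have closedK: "closed K" unfolding K_def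
    by (rule closed_Collect_le[OF cont]) (rule continuous_on_const)
  define dm where "dm = Min (range ?d)"
  have dm_pos: "dm > 0" unfolding dm_def using dp by (subst Min_gr_iff) auto
  have dm_le: "dm \<le> ?d x" for x unfolding dm_def by (rule Min_le) auto
  define R0 where "R0 = 2 * lam * ?P 0 + (\<Sum>x\<in>UNIV. (f$x)^2 / ?d x)"
  have bnd: "(norm q)^2 \<le> 2 * R0 / dm" if q: "q \<in> K" for q
  proof -
    have "(\<Sum>x\<in>UNIV. (f$x - ?d x * q$x)^2 / ?d x) / (2*lam) \<le> ?P q"
      unfolding Psi_def using Psi_second_nonneg[OF wp, of q] by linarith
    also have "\<dots> \<le> ?P 0" using q unfolding K_def by simp
    finally have A: "(\<Sum>x\<in>UNIV. (f$x - ?d x * q$x)^2 / ?d x) \<le> 2 * lam * ?P 0"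
      using lp by (simp add: divide_le_eq mult.commute)
    have B: "dm/2 * (q$x)^2 - (f$x)^2 / ?d x \<le> (f$x - ?d x * q$x)^2 / ?d x" for x
    proof -
      have dx: "?d x > 0" using dp by auto
      have "0 \<le> (2 * f$x - ?d x * q$x)^2" by simp
      then have "?d x * ?d x * (q$x)^2 / 2 - (f$x)^2 \<le> (f$x - ?d x * q$x)^2"
        by (simp add: power2_eq_square algebra_simps)
      then have "(?d x * ?d x * (q$x)^2 / 2 - (f$x)^2) / ?d x \<le> (f$x - ?d x * q$x)^2 / ?d x"
        using dx by (simp add: divide_right_mono)
      moreover have "(?d x * ?d x * (q$x)^2 / 2 - (f$x)^2) / ?d x = ?d x * (q$x)^2/2 - (f$x)^2 / ?d x"
        using dx by (simp add: field_simps power2_eq_square)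
      moreover have "dm/2 * (q$x)^2 \<le> ?d x * (q$x)^2/2"
        using dm_le[of x] by (simp add: mult_right_mono)
      ultimately show ?thesis by linarith
    qed
    have "dm/2 * (norm q)^2 - (\<Sum>x\<in>UNIV. (f$x)^2 / ?d x) = (\<Sum>x\<in>UNIV. dm/2 * (q$x)^2 - (f$x)^2 / ?d x)"
      by (simp add: norm_sq_sum sum_subtractf sum_distrib_left)
    also have "\<dots> \<le> (\<Sum>x\<in>UNIV. (f$x - ?d x * q$x)^2 / ?d x)" by (rule sum_mono) (rule B)
    finally have "dm/2 * (norm q)^2 \<le> R0" using A unfolding R0_def by linarith
    then show ?thesis using dm_pos by (simp add: field_simps)
  qed
  have "bounded K" unfolding bounded_iff
  proof (intro exI ballI)
    fix q assume q: "q \<in> K"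
    show "norm q \<le> max 1 (2 * R0 / dm)"
    proof (cases "norm q \<le> 1")
      case False
      then have "1 * norm q \<le> norm q * norm q" by (intro mult_right_mono) auto
      then have "norm q \<le> (norm q)^2" by (simp add: power2_eq_square)
      then show ?thesis using bnd[OF q] by linarith
    qed simp
  qed
  then have compK: "compact K" using closedK by (simp add: compact_eq_bounded_closed)
  have "0 \<in> K" unfolding K_def by simp
  then obtain p where p: "p \<in> K" "\<forall>y\<in>K. ?P p \<le> ?P y"
    using continuous_attains_inf[OF compK _ continuous_on_subset[OF cont]] by blast
  have "?P p \<le> ?P q" for q
  proof (cases "q \<in> K")
    case False
    then have "?P 0 < ?P q" unfolding K_def by simp
    moreover have "?P p \<le> ?P 0" using p \<open>0 \<in> K\<close> by blast
    ultimately show ?thesis by simp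
  qed (use p in blast)
  then show ?thesis by blast
qed



lemma perturb_mx:
  fixes E :: "'a::finite set set" and p v :: "real^'a"
  assumes ne: "\<forall>e\<in>E. e \<noteq> {}"
    and ceub: "\<forall>e\<in>E. \<forall>a\<in>e. \<forall>b\<in>e. p$a - p$b = mx e p \<longrightarrow> v$a - v$b \<le> ce e"
    and ceat: "\<forall>e\<in>E. \<exists>a\<in>e. \<exists>b\<in>e. ce e = v$a - v$b"
  shows "\<exists>s1>0. \<forall>s. 0 < s \<and> s \<le> s1 \<longrightarrow> (\<forall>e\<in>E. mx e (p + s *\<^sub>R v) \<le> mx e p + s * ce e)"
proof -
  define G where "G = (\<lambda>(e,a,b). mx e p - (p$a - p$b)) ` {(e,a,b). e \<in> E \<and> a \<in> e \<and> b \<in> e \<and> p$a - p$b \<noteq> mx e p}"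
  have finG: "finite G" unfolding G_def by (rule finite_imageI, rule finite_subset[OF subset_UNIV]) simp
  define \<gamma> where "\<gamma> = Min (insert 1 G)"
  have Gpos: "g > 0" if "g \<in> G" for g
  proof -
    from that obtain e a b where eab: "a \<in> e" "b \<in> e" "p$a - p$b \<noteq> mx e p" "g = mx e p - (p$a - p$b)"
      unfolding G_def by auto
    then show ?thesis using mx_ge[of a e b p] by linarith
  qed
  have gpos: "\<gamma> > 0" unfolding \<gamma>_def using finG Gpos by (simp add: Min_gr_iff)
  have gle: "\<gamma> \<le> g" if "g \<in> G" for g unfolding \<gamma>_def using finG that by (intro Min_le) auto
  define V where "V = (\<Sum>x\<in>UNIV. \<bar>v$x\<bar>)"
  have Vx: "\<bar>v$x\<bar> \<le> V" for x unfolding V_def by (rule member_le_sum) auto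
  have V0: "0 \<le> V" using Vx[of undefined] by linarith
  define s1 where "s1 = \<gamma> / (4*V+1)"
  have s1pos: "s1 > 0" unfolding s1_def using gpos V0 by simp
  have "\<forall>e\<in>E. mx e (p + s *\<^sub>R v) \<le> mx e p + s * ce e" if s: "0 < s" "s \<le> s1" for s
  proof
    fix e assume e: "e \<in> E"
    obtain a b where ab: "a \<in> e" "b \<in> e" "(p + s *\<^sub>R v)$a - (p + s *\<^sub>R v)$b = mx e (p + s *\<^sub>R v)"
    proof -
      have "e \<noteq> {}" using ne e by blast
      from mx_attain[OF this, of "p + s *\<^sub>R v"] show ?thesis using that by blast
    qed
    obtain a' b' where ab': "a' \<in> e" "b' \<in> e" "ce e = v$a' - v$b'" using ceat e by blast
    have val: "mx e (p + s *\<^sub>R v) = (p$a - p$b) + s * (v$a - v$b)"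
      using ab(3) by (simp add: right_diff_distrib)
    show "mx e (p + s *\<^sub>R v) \<le> mx e p + s * ce e"
    proof (cases "p$a - p$b = mx e p")
      case True
      then have "v$a - v$b \<le> ce e" using ceub e ab by blast
      then have "s * (v$a - v$b) \<le> s * ce e" using s by (simp add: mult_left_mono)
      then show ?thesis using val True by linarith
    next
      case False
      then have "mx e p - (p$a - p$b) \<in> G" unfolding G_def using e ab
        by (intro image_eqI[where x="(e,a,b)"]) auto
      then have g: "\<gamma> \<le> mx e p - (p$a - p$b)" by (rule gle)
      have "v$a - v$b - ce e \<le> 4 * V" using Vx[of a] Vx[of b] Vx[of a'] Vx[of b'] ab' by linarith
      then have "s * (v$a - v$b - ce e) \<le> s * (4*V)" using s by (simp add: mult_left_mono)
      also have "\<dots> \<le> s1 * (4*V)" using s V0 by (simp add: mult_right_mono)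
      also have "\<dots> \<le> \<gamma>"
      proof -
        have "s1 * (4*V) = \<gamma> * (4*V) / (4*V+1)" unfolding s1_def by simp
        also have "\<dots> \<le> \<gamma>" using V0 gpos by (simp add: pos_divide_le_eq distrib_left)
        finally show ?thesis .
      qed
      finally have "s * (v$a - v$b - ce e) \<le> \<gamma>" .
      then have "s * (v$a - v$b) - s * ce e \<le> \<gamma>" by (simp only: right_diff_distrib)
      then show ?thesis using val g by linarith
    qed
  qed
  then show ?thesis using s1pos by blast
qed

lemma Psi_expand:
  fixes E :: "'a::finite set set" and p v :: "real^'a"
  assumes ne: "\<forall>e\<in>E. e \<noteq> {}" and wp: "\<forall>e\<in>E. w e > 0"
    and dp: "\<forall>v. hdeg E w v > 0" and lp: "lam > 0" and s: "0 \<le> s"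
    and bd: "\<forall>e\<in>E. mx e (p + s *\<^sub>R v) \<le> mx e p + s * ce e"
  shows "Psi E w lam f (p + s *\<^sub>R v) \<le> Psi E w lam f p
     - s * ((\<chi> x. (f$x - hdeg E w x * p$x) / lam) \<bullet> v) + s * (\<Sum>e\<in>E. w e * mx e p * ce e)
     + s^2 * ((\<Sum>x\<in>UNIV. hdeg E w x * (v$x)^2) / (2*lam) + (\<Sum>e\<in>E. w e * (ce e)^2) / 2)"
proof -
  let ?d = "hdeg E w"
  have px: "(f$x - ?d x * (p + s *\<^sub>R v)$x)^2 / ?d x / (2*lam) =
        (f$x - ?d x * p$x)^2 / ?d x / (2*lam) - s * ((f$x - ?d x * p$x) / lam * v$x)
        + s^2 * (?d x * (v$x)^2 / (2*lam))" for x
  proof -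
    have dx: "?d x \<noteq> 0" using dp by (metis less_irrefl)
    have "lam \<noteq> 0" using lp by simp
    then show ?thesis using dx by (simp add: field_simps power2_eq_square)
  qed
  have first: "(\<Sum>x\<in>UNIV. (f$x - ?d x * (p + s *\<^sub>R v)$x)^2 / ?d x) / (2*lam) =
     (\<Sum>x\<in>UNIV. (f$x - ?d x * p$x)^2 / ?d x) / (2*lam) - s * ((\<chi> x. (f$x - ?d x * p$x) / lam) \<bullet> v)
     + s^2 * ((\<Sum>x\<in>UNIV. ?d x * (v$x)^2) / (2*lam))"
  proof -
    have "(\<Sum>x\<in>UNIV. (f$x - ?d x * (p + s *\<^sub>R v)$x)^2 / ?d x) / (2*lam) =
       (\<Sum>x\<in>UNIV. (f$x - ?d x * (p + s *\<^sub>R v)$x)^2 / ?d x / (2*lam))"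
      by (simp only: sum_divide_distrib)
    also have "\<dots> = (\<Sum>x\<in>UNIV. (f$x - ?d x * p$x)^2 / ?d x / (2*lam) - s * ((f$x - ?d x * p$x) / lam * v$x)
        + s^2 * (?d x * (v$x)^2 / (2*lam)))"
      by (simp only: px)
    also have "\<dots> = (\<Sum>x\<in>UNIV. (f$x - ?d x * p$x)^2 / ?d x) / (2*lam) - s * (\<Sum>x\<in>UNIV. (f$x - ?d x * p$x) / lam * v$x)
        + s^2 * ((\<Sum>x\<in>UNIV. ?d x * (v$x)^2) / (2*lam))"
      by (simp only: sum.distrib sum_subtractf sum_distrib_left[symmetric] sum_divide_distrib[symmetric])
    also have "(\<Sum>x\<in>UNIV. (f$x - ?d x * p$x) / lam * v$x) = (\<chi> x. (f$x - ?d x * p$x) / lam) \<bullet> v"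
      by (simp add: inner_vec_def)
    finally show ?thesis .
  qed
  have pe: "w e * (mx e (p + s *\<^sub>R v))^2 / 2 \<le> w e * (mx e p)^2 / 2 + s * (w e * mx e p * ce e) + s^2 * (w e * (ce e)^2 / 2)"
    if e: "e \<in> E" for e
  proof -
    have "(mx e (p + s *\<^sub>R v))^2 \<le> (mx e p + s * ce e)^2"
      using bd e mx_nonneg[of e] ne by (intro power_mono) auto
    then have "w e * (mx e (p + s *\<^sub>R v))^2 \<le> w e * (mx e p + s * ce e)^2"
      using wp e by (intro mult_left_mono) auto
    then show ?thesis by (simp add: power2_eq_square algebra_simps)
  qed
  have second: "(\<Sum>e\<in>E. w e * (mx e (p + s *\<^sub>R v))^2) / 2 \<le>
       (\<Sum>e\<in>E. w e * (mx e p)^2) / 2 + s * (\<Sum>e\<in>E. w e * mx e p * ce e) + s^2 * ((\<Sum>e\<in>E. w e * (ce e)^2) / 2)"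
  proof -
    have "(\<Sum>e\<in>E. w e * (mx e (p + s *\<^sub>R v))^2) / 2 = (\<Sum>e\<in>E. w e * (mx e (p + s *\<^sub>R v))^2 / 2)"
      by (simp add: sum_divide_distrib)
    also have "\<dots> \<le> (\<Sum>e\<in>E. w e * (mx e p)^2 / 2 + s * (w e * mx e p * ce e) + s^2 * (w e * (ce e)^2 / 2))"
      by (rule sum_mono) (rule pe)
    also have "\<dots> = (\<Sum>e\<in>E. w e * (mx e p)^2) / 2 + s * (\<Sum>e\<in>E. w e * mx e p * ce e) + s^2 * ((\<Sum>e\<in>E. w e * (ce e)^2) / 2)"
      by (simp add: sum.distrib sum_distrib_left sum_divide_distrib)
    finally show ?thesis .
  qed
  show ?thesis unfolding Psi_def using first second by (simp add: algebra_simps)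
qed



lemma resolvent_exists:
  fixes E :: "'a::finite set set"
  assumes ne: "\<forall>e\<in>E. e \<noteq> {}" and wp: "\<forall>e\<in>E. w e > 0"
    and dp: "\<forall>v. hdeg E w v > 0" and lp: "lam > 0"
  shows "\<exists>g. \<exists>u\<in>hLnorm E w g. f = g + lam *\<^sub>R u"
proof -
  let ?d = "hdeg E w"
  let ?P = "Psi E w lam f"
  obtain p where pmin: "\<forall>q. ?P p \<le> ?P q" using Psi_min_exists[OF ne wp dp lp] by blast
  define t where "t = (\<chi> x. (f$x - ?d x * p$x) / lam)"
  define S where "S = {\<Sum>e\<in>E. (w e * mx e p) *\<^sub>R b e | b. \<forall>e\<in>E. b e \<in> argmaxB e p}"
  have ccS: "compact S \<and> convex S" unfolding S_def
  proof (rule sumset_cc[OF finite_E], intro ballI)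
    fix e assume "e \<in> E"
    then have "e \<noteq> {}" using ne by blast
    then show "compact (argmaxB e p) \<and> convex (argmaxB e p)" by (rule argmaxB_cc)
  qed
  have tS: "t \<in> S"
  proof (rule ccontr)
    assume "t \<notin> S"
    then obtain a \<beta> where ab: "a \<bullet> t < \<beta>" "\<forall>s\<in>S. \<beta> < a \<bullet> s"
      using separating_hyperplane_closed_point[of S t] ccS compact_imp_closed by blast
    define v where "v = - a"
    define P0 where "P0 e = {(a,b). a \<in> e \<and> b \<in> e \<and> p$a - p$b = mx e p}" for e
    define ce where "ce e = Max ((\<lambda>(a,b). v$a - v$b) ` P0 e)" for e
    have finP0: "finite (P0 e)" for e by (rule finite_subset[OF subset_UNIV]) simp
    have neP0: "P0 e \<noteq> {}" if "e \<in> E" for e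
      using mx_attain[of e p] ne that unfolding P0_def by auto
    have ceub: "\<forall>e\<in>E. \<forall>a\<in>e. \<forall>b\<in>e. p$a - p$b = mx e p \<longrightarrow> v$a - v$b \<le> ce e"
    proof (intro ballI impI)
      fix e a b assume "e \<in> E" "a \<in> e" "b \<in> e" "p$a - p$b = mx e p"
      then have "(a,b) \<in> P0 e" unfolding P0_def by simp
      then show "v$a - v$b \<le> ce e" unfolding ce_def using finP0[of e]
        by (intro Max_ge) (auto intro!: image_eqI[where x="(a,b)"])
    qed
    have "\<exists>ab. fst ab \<in> e \<and> snd ab \<in> e \<and> p$fst ab - p$snd ab = mx e p \<and> ce e = v$fst ab - v$snd ab"
      if e: "e \<in> E" for e
    proof -
      have "ce e \<in> (\<lambda>(a,b). v$a - v$b) ` P0 e"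
        unfolding ce_def using finP0[of e] neP0[OF e] by (intro Max_in) auto
      then obtain ab where "ab \<in> P0 e" "ce e = (\<lambda>(a,b). v$a - v$b) ab" by blast
      then show ?thesis unfolding P0_def by (intro exI[of _ ab]) (auto simp: case_prod_beta)
    qed
    then obtain pr where pr: "\<forall>e\<in>E. fst (pr e) \<in> e \<and> snd (pr e) \<in> e \<and> p$fst (pr e) - p$snd (pr e) = mx e p
        \<and> ce e = v$fst (pr e) - v$snd (pr e)"
      by metis
    have ceat: "\<forall>e\<in>E. \<exists>a\<in>e. \<exists>b\<in>e. ce e = v$a - v$b" using pr by blast
    define bs where "bs e = delta (fst (pr e)) - delta (snd (pr e))" for e
    have bsA: "\<forall>e\<in>E. bs e \<in> argmaxB e p" unfolding bs_def using pr gen_argmax by blast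
    define s0 where "s0 = (\<Sum>e\<in>E. (w e * mx e p) *\<^sub>R bs e)"
    have "s0 \<in> S" unfolding S_def s0_def using bsA by blast
    then have s0a: "\<beta> < a \<bullet> s0" using ab by blast
    have bsv: "bs e \<bullet> v = ce e" if "e \<in> E" for e
      using pr that unfolding bs_def by (simp add: inner_diff_left inner_delta)
    have s0v: "s0 \<bullet> v = (\<Sum>e\<in>E. w e * mx e p * ce e)"
      unfolding s0_def inner_sum_left by (intro sum.cong refl) (simp add: bsv)
    define \<eta> where "\<eta> = t \<bullet> v - s0 \<bullet> v"
    have etapos: "\<eta> > 0" unfolding \<eta>_def v_def using ab(1) s0a by (simp add: inner_commute)
    obtain s1 where s1: "s1 > 0" "\<forall>s. 0 < s \<and> s \<le> s1 \<longrightarrow> (\<forall>e\<in>E. mx e (p + s *\<^sub>R v) \<le> mx e p + s * ce e)"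
      using perturb_mx[OF ne ceub ceat] by blast
    define C where "C = (\<Sum>x\<in>UNIV. ?d x * (v$x)^2) / (2*lam) + (\<Sum>e\<in>E. w e * (ce e)^2) / 2"
    have C0: "0 \<le> C" unfolding C_def using dp wp lp
      by (intro add_nonneg_nonneg divide_nonneg_nonneg sum_nonneg mult_nonneg_nonneg) (auto simp: less_imp_le)
    define s where "s = min s1 (\<eta> / (C+1))"
    have spos: "s > 0" unfolding s_def using s1 etapos C0 by simp
    have sle: "s \<le> s1" unfolding s_def by simp
    have "?P (p + s *\<^sub>R v) \<le> ?P p - s * (t \<bullet> v) + s * (\<Sum>e\<in>E. w e * mx e p * ce e) + s^2 * C"
      unfolding t_def C_def
    proof (rule Psi_expand[OF ne wp dp lp])
      show "0 \<le> s" using spos by simp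
      show "\<forall>e\<in>E. mx e (p + s *\<^sub>R v) \<le> mx e p + s * ce e" using spos sle s1 by blast
    qed
    also have "\<dots> = ?P p - s * \<eta> + s * (s * C)" unfolding \<eta>_def s0v[symmetric]
      by (simp add: power2_eq_square algebra_simps)
    also have "\<dots> < ?P p"
    proof -
      have "s * C \<le> \<eta> / (C+1) * C" unfolding s_def using C0 by (intro mult_right_mono) auto
      also have "\<dots> < \<eta>" using C0 etapos by (simp add: field_simps)
      finally have "s * (s * C) < s * \<eta>" using spos by simp
      then show ?thesis by simp
    qed
    finally show False using pmin by (metis not_le)
  qed
  then obtain b where b: "\<forall>e\<in>E. b e \<in> argmaxB e p" "t = (\<Sum>e\<in>E. (w e * mx e p) *\<^sub>R b e)"
    unfolding S_def by blast
  have "t = (\<Sum>e\<in>E. (w e * (b e \<bullet> p)) *\<^sub>R b e)"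
    unfolding b(2)
  proof (intro sum.cong refl)
    fix e assume e: "e \<in> E"
    then have "e \<noteq> {}" using ne by blast
    then have "b e \<bullet> p = mx e p" using argmaxB_val b(1) e by blast
    then show "(w e * mx e p) *\<^sub>R b e = (w e * (b e \<bullet> p)) *\<^sub>R b e" by simp
  qed
  then have tL: "t \<in> hLap E w p" unfolding hLap_def using b(1) by blast
  define g where "g = (\<chi> x. ?d x * p$x)"
  have "Dinv E w g = p" unfolding Dinv_def g_def using dp by (simp add: vec_eq_iff less_imp_neq[symmetric])
  then have "t \<in> hLnorm E w g" unfolding hLnorm_def using tL by simp
  moreover have "f = g + lam *\<^sub>R t" unfolding g_def t_def using lp by (simp add: vec_eq_iff)
  ultimately show ?thesis by blast
qed

lemma Tw_inj:
  assumes dp: "\<forall>v. hdeg E w v > 0" and "Tw E w g1 = Tw E w g2"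
  shows "g1 = g2"
proof -
  have "g1$x = g2$x" for x
  proof -
    have "g1$x / sqrt (hdeg E w x) = g2$x / sqrt (hdeg E w x)"
    proof -
      have "Tw E w g1 $ x = Tw E w g2 $ x" using assms(2) by simp
      then show ?thesis by (simp add: Tw_def)
    qed
    moreover have "sqrt (hdeg E w x) \<noteq> 0" using dp by (metis less_irrefl real_sqrt_eq_zero_cancel_iff)
    ultimately show ?thesis by simp
  qed
  then show ?thesis by (simp add: vec_eq_iff)
qed

lemma resolvent_unique:
  assumes ne: "\<forall>e\<in>E. e \<noteq> {}" and wp: "\<forall>e\<in>E. w e > 0"
    and dp: "\<forall>v. hdeg E w v > 0" and lp: "lam > 0"
    and u1: "u1 \<in> hLnorm E w g1" and u2: "u2 \<in> hLnorm E w g2"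
    and f1: "f = g1 + lam *\<^sub>R u1" and f2: "f = g2 + lam *\<^sub>R u2"
  shows "g1 = g2"
proof -
  let ?T = "Tw E w"
  define A where "A = ?T u1 - ?T u2"
  define B where "B = ?T g1 - ?T g2"
  have eq: "g1 - g2 = lam *\<^sub>R (u2 - u1)" using f1 f2 by (simp add: algebra_simps)
  have "B = ?T (g1 - g2)" unfolding B_def Tw_diff ..
  also have "\<dots> = lam *\<^sub>R (?T u2 - ?T u1)" by (simp only: eq Tw_scale Tw_diff)
  also have "\<dots> = - lam *\<^sub>R A" unfolding A_def by (simp add: algebra_simps)
  finally have Beq: "B = - lam *\<^sub>R A" .
  have "0 \<le> A \<bullet> B" using hLnorm_mono[OF ne wp u1 u2]
    unfolding winner_T[OF dp] A_def B_def Tw_diff .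
  then have "lam * (A \<bullet> A) \<le> 0" by (simp add: Beq)
  then have "A \<bullet> A \<le> 0" using lp by (simp add: mult_le_0_iff)
  then have "A \<bullet> A = 0" using inner_ge_zero[of A] by linarith
  then have "A = 0" by simp
  then have "B = 0" using Beq by simp
  then show ?thesis unfolding B_def using Tw_inj[OF dp] by simp
qed

lemma resolvent_spec:
  assumes ne: "\<forall>e\<in>E. e \<noteq> {}" and wp: "\<forall>e\<in>E. w e > 0"
    and dp: "\<forall>v. hdeg E w v > 0" and lp: "lam > 0"
  shows "\<exists>u\<in>hLnorm E w (resolvent E w lam f). f = resolvent E w lam f + lam *\<^sub>R u"
proof -
  have "\<exists>!g. \<exists>u\<in>hLnorm E w g. f = g + lam *\<^sub>R u"
    using resolvent_exists[OF ne wp dp lp, of f] resolvent_unique[OF ne wp dp lp] by blast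
  then show ?thesis unfolding resolvent_def by (rule theI')
qed



lemma hdist_le1:
  assumes e: "e \<in> E" and a: "a \<in> e" and b: "b \<in> e"
  shows "hdist E a b \<le> 1"
proof -
  have "hchain E a b 1" unfolding hchain_def hadj_def using e a b
    by (intro exI[of _ "\<lambda>i::nat. if i = 0 then a else b"]) auto
  then show ?thesis unfolding hdist_def by (rule Least_le)
qed

lemma u0_exists:
  fixes E :: "'a::finite set set"
  assumes ne: "\<forall>e\<in>E. e \<noteq> {}" and wp: "\<forall>e\<in>E. w e > 0"
    and dp: "\<forall>v. hdeg E w v > 0" and fL: "f \<in> Lip1w E w"
  shows "\<exists>u0\<in>hLnorm E w f. norm (Tw E w u0) \<le> sqrt (hvol E w)"
proof -
  let ?d = "hdeg E w"
  define p where "p = Dinv E w f"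
  have "\<exists>ab. fst ab \<in> e \<and> snd ab \<in> e \<and> p$fst ab - p$snd ab = mx e p" if e: "e \<in> E" for e
  proof -
    have "e \<noteq> {}" using ne e by blast
    from mx_attain[OF this, of p] obtain a b where "a \<in> e" "b \<in> e" "p$a - p$b = mx e p" by blast
    then show ?thesis by (intro exI[of _ "(a,b)"]) simp
  qed
  then obtain pr where pr: "\<forall>e\<in>E. fst (pr e) \<in> e \<and> snd (pr e) \<in> e \<and> p$fst (pr e) - p$snd (pr e) = mx e p"
    by metis
  define bs where "bs e = delta (fst (pr e)) - delta (snd (pr e))" for e
  have bsA: "\<forall>e\<in>E. bs e \<in> argmaxB e p" unfolding bs_def using pr gen_argmax by blast
  define u0 where "u0 = (\<Sum>e\<in>E. (w e * (bs e \<bullet> p)) *\<^sub>R bs e)"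
  have "u0 \<in> hLap E w p" unfolding hLap_def u0_def using bsA by blast
  then have u0L: "u0 \<in> hLnorm E w f" unfolding hLnorm_def p_def by simp
  have c1: "\<bar>bs e \<bullet> p\<bar> \<le> 1" if e: "e \<in> E" for e
  proof -
    let ?a = "fst (pr e)"
  let ?b = "snd (pr e)"
    have "bs e \<bullet> p = f$?a / ?d ?a - f$?b / ?d ?b"
      unfolding bs_def p_def by (simp add: inner_diff_left inner_delta Dinv_def)
    also have "\<bar>\<dots>\<bar> \<le> real (hdist E ?a ?b)" using fL unfolding Lip1w_def by blast
    also have "\<dots> \<le> 1" using hdist_le1[OF e] pr e by simp
    finally show ?thesis .
  qed
  have c2: "\<bar>w e * (bs e \<bullet> p) * bs e $ x\<bar> \<le> (if x \<in> e then w e else 0)" if e: "e \<in> E" for e x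
  proof -
    have bx: "bs e $ x = (if x = fst (pr e) then 1 else 0) - (if x = snd (pr e) then 1 else 0)"
      unfolding bs_def by (simp add: delta_nth)
    have w0: "0 \<le> w e" using wp e by (simp add: less_imp_le)
    show ?thesis
    proof (cases "x \<in> e")
      case True
      have "\<bar>bs e $ x\<bar> \<le> 1" unfolding bx by auto
      then have "\<bar>bs e \<bullet> p\<bar> * \<bar>bs e $ x\<bar> \<le> 1 * 1" using c1[OF e] by (intro mult_mono) auto
      then have "w e * (\<bar>bs e \<bullet> p\<bar> * \<bar>bs e $ x\<bar>) \<le> w e * 1" using w0 by (intro mult_left_mono) auto
      then show ?thesis using True w0 by (simp add: abs_mult)
    next
      case False
      then have "bs e $ x = 0" unfolding bx using pr e by auto
      then show ?thesis using False by simp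
    qed
  qed
  have ux: "\<bar>u0 $ x\<bar> \<le> ?d x" for x
  proof -
    have "u0 $ x = (\<Sum>e\<in>E. w e * (bs e \<bullet> p) * bs e $ x)" unfolding u0_def by (simp add: sum_component)
    then have "\<bar>u0 $ x\<bar> \<le> (\<Sum>e\<in>E. \<bar>w e * (bs e \<bullet> p) * bs e $ x\<bar>)" by (simp add: sum_abs)
    also have "\<dots> \<le> (\<Sum>e\<in>E. if x \<in> e then w e else 0)" by (rule sum_mono) (rule c2)
    also have "\<dots> = ?d x" unfolding hdeg_def by (simp add: sum.inter_filter finite_E)
    finally show ?thesis .
  qed
  have "(norm (Tw E w u0))^2 = (\<Sum>x\<in>UNIV. (u0$x)^2 / ?d x)"
    unfolding norm_sq_sum Tw_def using dp by (simp add: power_divide less_imp_le)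
  also have "\<dots> \<le> (\<Sum>x\<in>UNIV. ?d x)"
  proof (rule sum_mono)
    fix x
    have dx: "?d x > 0" using dp by blast
    have "(u0$x)^2 \<le> (?d x)^2" using ux[of x] by (metis abs_le_square_iff abs_of_pos dx)
    then show "(u0$x)^2 / ?d x \<le> ?d x" using dx by (simp add: divide_le_eq power2_eq_square)
  qed
  also have "\<dots> = hvol E w" unfolding hvol_def ..
  finally have "norm (Tw E w u0) \<le> sqrt (hvol E w)" by (rule real_le_rsqrt)
  then show ?thesis using u0L by blast
qed

lemma u1_bound:
  fixes E :: "'a::finite set set"
  assumes ne: "\<forall>e\<in>E. e \<noteq> {}" and wp: "\<forall>e\<in>E. w e > 0"
    and dp: "\<forall>v. hdeg E w v > 0" and fL: "f \<in> Lip1w E w" and lp: "lam > 0"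
    and u1: "u1 \<in> hLnorm E w g1" and f1: "f = g1 + lam *\<^sub>R u1"
  shows "norm (Tw E w u1) \<le> sqrt (hvol E w)"
proof -
  obtain u0 where u0: "u0 \<in> hLnorm E w f" "norm (Tw E w u0) \<le> sqrt (hvol E w)"
    using u0_exists[OF ne wp dp fL] by blast
  let ?A = "Tw E w u1"
  let ?B = "Tw E w u0"
  have geq: "g1 - f = (- lam) *\<^sub>R u1" by (subst f1) (simp add: algebra_simps)
  have "Tw E w g1 - Tw E w f = Tw E w (g1 - f)" by (simp only: Tw_diff)
  also have "\<dots> = (- lam) *\<^sub>R ?A" by (simp only: geq Tw_scale)
  finally have teq: "Tw E w g1 - Tw E w f = (- lam) *\<^sub>R ?A" .
  have "0 \<le> winner E w (u1 - u0) (g1 - f)" by (rule hLnorm_mono[OF ne wp u1 u0(1)])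
  then have "0 \<le> (?A - ?B) \<bullet> ((- lam) *\<^sub>R ?A)" unfolding winner_T[OF dp] Tw_diff teq by simp
  then have "lam * (?A \<bullet> ?A) \<le> lam * (?B \<bullet> ?A)" by (simp add: inner_diff_left algebra_simps)
  then have "?A \<bullet> ?A \<le> ?B \<bullet> ?A" using lp by simp
  also have "\<dots> \<le> norm ?B * norm ?A" by (rule norm_cauchy_schwarz)
  finally have "norm ?A * norm ?A \<le> norm ?B * norm ?A" by (simp add: dot_square_norm power2_eq_square)
  then have "norm ?A \<le> norm ?B"
    by (cases "norm ?A = 0") (auto simp: mult_le_cancel_right)
  then show ?thesis using u0(2) by linarith
qed

lemma diff_bound:
  fixes E :: "'a::finite set set"
  assumes ne: "\<forall>e\<in>E. e \<noteq> {}" and wp: "\<forall>e\<in>E. w e > 0"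
    and dp: "\<forall>v. hdeg E w v > 0" and fL: "f \<in> Lip1w E w" and lp: "lam > 0" and mp: "mu > 0"
  shows "norm (Tw E w (resolvent E w lam f) - Tw E w (resolvent E w mu f)) \<le> \<bar>lam - mu\<bar> * sqrt (hvol E w)"
proof -
  obtain u1 where u1: "u1 \<in> hLnorm E w (resolvent E w lam f)" "f = resolvent E w lam f + lam *\<^sub>R u1"
    using resolvent_spec[OF ne wp dp lp] by blast
  obtain u2 where u2: "u2 \<in> hLnorm E w (resolvent E w mu f)" "f = resolvent E w mu f + mu *\<^sub>R u2"
    using resolvent_spec[OF ne wp dp mp] by blast
  let ?g1 = "resolvent E w lam f"
  let ?g2 = "resolvent E w mu f"
  define A1 where "A1 = Tw E w u1"
  define A2 where "A2 = Tw E w u2"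
  define D where "D = Tw E w ?g1 - Tw E w ?g2"
  have "?g1 - ?g2 = mu *\<^sub>R u2 - lam *\<^sub>R u1" using u1(2) u2(2) by (simp add: algebra_simps)
  then have Deq: "D = mu *\<^sub>R A2 - lam *\<^sub>R A1" unfolding D_def A1_def A2_def
    by (metis Tw_diff Tw_scale)
  have mono: "0 \<le> (A1 - A2) \<bullet> D" using hLnorm_mono[OF ne wp u1(1) u2(1)]
    unfolding winner_T[OF dp] A1_def A2_def D_def Tw_diff .
  have A1b: "norm A1 \<le> sqrt (hvol E w)" unfolding A1_def by (rule u1_bound[OF ne wp dp fL lp u1])
  have "D \<bullet> D = mu * (D \<bullet> (A2 - A1)) + (mu - lam) * (D \<bullet> A1)"
    by (subst (2) Deq) (simp add: inner_diff_right algebra_simps)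
  also have "mu * (D \<bullet> (A2 - A1)) \<le> 0"
  proof -
    have "D \<bullet> (A2 - A1) \<le> 0" using mono by (simp add: inner_diff_right inner_diff_left inner_commute)
    then show ?thesis using mp by (simp add: mult_nonneg_nonpos less_imp_le)
  qed
  also have "(mu - lam) * (D \<bullet> A1) \<le> \<bar>lam - mu\<bar> * (norm D * norm A1)"
  proof -
    have "(mu - lam) * (D \<bullet> A1) \<le> \<bar>(mu - lam) * (D \<bullet> A1)\<bar>" by simp
    also have "\<dots> = \<bar>lam - mu\<bar> * \<bar>D \<bullet> A1\<bar>" by (simp add: abs_mult abs_minus_commute)
    also have "\<dots> \<le> \<bar>lam - mu\<bar> * (norm D * norm A1)" by (intro mult_left_mono Cauchy_Schwarz_ineq2) auto
    finally show ?thesis .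
  qed
  finally have "norm D * norm D \<le> norm D * (\<bar>lam - mu\<bar> * norm A1)"
    by (simp add: dot_square_norm power2_eq_square algebra_simps)
  then have "norm D \<le> \<bar>lam - mu\<bar> * norm A1"
    by (cases "norm D = 0") (auto simp: mult_le_cancel_left)
  also have "\<dots> \<le> \<bar>lam - mu\<bar> * sqrt (hvol E w)" using A1b by (intro mult_left_mono) auto
  finally show ?thesis unfolding D_def .
qed

lemma sup_diff:
  fixes a b :: "'x \<Rightarrow> real"
  assumes "A \<noteq> {}" "bdd_above (a ` A)" "bdd_above (b ` A)" "\<forall>f\<in>A. \<bar>a f - b f\<bar> \<le> K"
  shows "\<bar>Sup (a ` A) - Sup (b ` A)\<bar> \<le> K"
proof -
  have 1: "Sup (a ` A) \<le> Sup (b ` A) + K"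
  proof (rule cSUP_least[OF assms(1)])
    fix f assume f: "f \<in> A"
    have "b f \<le> Sup (b ` A)" by (rule cSUP_upper[OF f assms(3)])
    then show "a f \<le> Sup (b ` A) + K" using assms(4) f by fastforce
  qed
  have 2: "Sup (b ` A) \<le> Sup (a ` A) + K"
  proof (rule cSUP_least[OF assms(1)])
    fix f assume f: "f \<in> A"
    have "a f \<le> Sup (a ` A)" by (rule cSUP_upper[OF f assms(2)])
    then show "b f \<le> Sup (a ` A) + K" using assms(4) f by fastforce
  qed
  show ?thesis using 1 2 by linarith
qed

theorem mainTheorem7:
  fixes E :: "'a::finite set set" and w :: "'a set \<Rightarrow> real"
    and lam mu :: real and x y :: 'a
  assumes "\<forall>e\<in>E. e \<noteq> {}"
    and "\<forall>e\<in>E. w e > 0"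
    and "hconnected E"
    and "\<forall>v. hdeg E w v > 0"
    and "lam > 0" and "mu > 0"
  shows "\<bar>KD E w lam x y - KD E w mu x y\<bar>
    \<le> 2 * (MAX v\<in>UNIV. 1 / sqrt (hdeg E w v)) * sqrt (hvol E w) * \<bar>lam - mu\<bar>"
proof -
  note ne = assms(1) and wp = assms(2) and dp = assms(4) and lp = assms(5) and mp = assms(6)
  define M where "M = (MAX v\<in>UNIV. 1 / sqrt (hdeg E w v))"
  define L where "L = Lip1w E w"
  define \<phi> where "\<phi> l f = winner E w (resolvent E w l f) (delta x - delta y)" for l f
  let ?T = "Tw E w"
  have Mge: "1 / sqrt (hdeg E w v) \<le> M" for v unfolding M_def by (rule Max_ge) auto
  have M0: "0 \<le> M" using Mge[of x] dp by (metis order_trans less_imp_le real_sqrt_gt_zero zero_le_divide_1_iff)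
  have dnorm: "norm (?T (delta x) - ?T (delta y)) \<le> 2 * M"
  proof -
    have "norm (?T (delta x) - ?T (delta y)) \<le> norm (?T (delta x)) + norm (?T (delta y))" by (rule norm_triangle_ineq4)
    also have "\<dots> \<le> M + M" unfolding norm_Tw_delta[OF dp] using Mge by (intro add_mono) auto
    finally show ?thesis by simp
  qed
  have phiT: "\<phi> l f = ?T (resolvent E w l f) \<bullet> (?T (delta x) - ?T (delta y))" for l f
    unfolding \<phi>_def winner_T[OF dp] Tw_diff ..
  have V0: "0 \<le> sqrt (hvol E w)" unfolding hvol_def using dp by (simp add: sum_nonneg less_imp_le)
  have close: "\<bar>\<phi> lam f - \<phi> mu f\<bar> \<le> 2 * M * sqrt (hvol E w) * \<bar>lam - mu\<bar>" if fL: "f \<in> L" for f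
  proof -
    have "\<bar>\<phi> lam f - \<phi> mu f\<bar> = \<bar>(?T (resolvent E w lam f) - ?T (resolvent E w mu f)) \<bullet> (?T (delta x) - ?T (delta y))\<bar>"
      unfolding phiT inner_diff_left ..
    also have "\<dots> \<le> norm (?T (resolvent E w lam f) - ?T (resolvent E w mu f)) * norm (?T (delta x) - ?T (delta y))"
      by (rule Cauchy_Schwarz_ineq2)
    also have "\<dots> \<le> (\<bar>lam - mu\<bar> * sqrt (hvol E w)) * (2 * M)"
      using diff_bound[OF ne wp dp fL[unfolded L_def] lp mp] dnorm V0
      by (intro mult_mono) auto
    finally show ?thesis by (simp add: algebra_simps)
  qed
  have bdd: "bdd_above ((\<phi> l) ` L)" if lp': "l > 0" for l
  proof (rule bdd_aboveI2)
    fix f assume fL: "f \<in> L"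
    obtain u1 where u1: "u1 \<in> hLnorm E w (resolvent E w l f)" "f = resolvent E w l f + l *\<^sub>R u1"
      using resolvent_spec[OF ne wp dp lp'] by blast
    have "resolvent E w l f = f - l *\<^sub>R u1" using u1(2) by (metis add_diff_cancel_right')
    then have eq1: "\<phi> l f = ?T f \<bullet> (?T (delta x) - ?T (delta y)) - l * (?T u1 \<bullet> (?T (delta x) - ?T (delta y)))"
      unfolding phiT by (simp add: Tw_diff Tw_scale inner_diff_left)
    have eq2: "?T f \<bullet> (?T (delta x) - ?T (delta y)) = f$x / hdeg E w x - f$y / hdeg E w y"
      using winner_T[OF dp, of f "delta x - delta y"] by (simp add: Tw_diff winner_diff2 winner_delta)
    have "\<bar>f$x / hdeg E w x - f$y / hdeg E w y\<bar> \<le> real (hdist E x y)" using fL unfolding L_def Lip1w_def by blast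
    then have le1: "f$x / hdeg E w x - f$y / hdeg E w y \<le> real (hdist E x y)" by (rule abs_le_D1)
    have le2: "- (l * (?T u1 \<bullet> (?T (delta x) - ?T (delta y)))) \<le> l * (sqrt (hvol E w) * (2 * M))"
    proof -
      have "\<bar>?T u1 \<bullet> (?T (delta x) - ?T (delta y))\<bar> \<le> norm (?T u1) * norm (?T (delta x) - ?T (delta y))"
        by (rule Cauchy_Schwarz_ineq2)
      also have "\<dots> \<le> sqrt (hvol E w) * (2 * M)"
        using u1_bound[OF ne wp dp fL[unfolded L_def] lp' u1] dnorm V0 by (intro mult_mono) auto
      finally have "- (?T u1 \<bullet> (?T (delta x) - ?T (delta y))) \<le> sqrt (hvol E w) * (2 * M)" by linarith
      then have "l * (- (?T u1 \<bullet> (?T (delta x) - ?T (delta y)))) \<le> l * (sqrt (hvol E w) * (2 * M))"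
        using lp' by (intro mult_left_mono) auto
      then show ?thesis by simp
    qed
    show "\<phi> l f \<le> real (hdist E x y) + l * (sqrt (hvol E w) * (2 * M))" using eq1 eq2 le1 le2 by linarith
  qed
  have Lne: "L \<noteq> {}" unfolding L_def Lip1w_def by (intro ex_in_conv[THEN iffD1] exI[of _ 0]) auto
  have KDeq: "KD E w l x y = Sup ((\<phi> l) ` L)" for l
    unfolding KD_def \<phi>_def L_def by (simp add: Setcompr_eq_image)
  show ?thesis unfolding KDeq M_def[symmetric]
  proof (rule sup_diff[OF Lne bdd[OF lp] bdd[OF mp]])
    show "\<forall>f\<in>L. \<bar>\<phi> lam f - \<phi> mu f\<bar> \<le> 2 * M * sqrt (hvol E w) * \<bar>lam - mu\<bar>" using close by blast
  qed
qed

end
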